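(* Let $mG_1,\dots,mG_n$ be a finite sequence of canonical misinformation games such that $mG_{i+1}\in\mathcal{AD}(\{mG_i\})$ for all $i\in\{1,\dots,n-1\}$ and $mG_1\in\mathcal{AD}(\{mG_n\})$. Then $mG_i=mG_j$ for all $i,j$.
   Context: A normal-form game is $G=\langle N,S,P\rangle$ with finite players $N$, finite pure strategy sets $S_i$, positions $S=\times_i S_i$, payoffs $P_i:S\to\mathbb{R}$. A misinformation game $mG=\langle G^0,G^1,\dots,G^{|N|}\rangle$ consists of the actual game $G^0$ and subjective games $G^i$; it is canonical if all $G^i=\langle N,S,P^i\rangle$ differ from $G^0$ only in payoffs and in every $G^i$ all players have equally many pure strategies. $NME(mG)$ is the set of profiles $\sigma=(\sigma_1,\dots,\sigma_{|N|})$ such that each $\sigma_i$ is player $i$'s component of some Nash equilibrium of $G^i$. $\chi(\sigma)=\mathrm{supp}(\sigma_1)\times\dots\times\mathrm{supp}(\sigma_{|N|})$. For $\vec v\in S$, $mG_{\vec v}$ is obtained by replacing, in every $P^i$ ($i\ge1$), the payoff vector at position $\vec v$ by $P^0(\vec v)$ (the actual game $G^0$ is unchanged). For a set $M$ of misinformation games, $\mathcal{AD}(M)=\{mG_{\vec u}: mG\in M,\sigma\in NME(mG),\vec u\in\chi(\sigma)\}$. *)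

theory Defs
  imports Complex_Main
begin

text \<open>Normal-form games. The set of players is the finite type 'n (N = UNIV).
  A pure strategy profile (position) is a function v :: 'n => 's with v i in S i.\<close>

record ('n, 's) nfgame =
  strats :: "'n \<Rightarrow> 's set"
  payoff :: "'n \<Rightarrow> ('n \<Rightarrow> 's) \<Rightarrow> real"

definition positions :: "('n, 's) nfgame \<Rightarrow> ('n \<Rightarrow> 's) set" where
  "positions G = {v. \<forall>i. v i \<in> strats G i}"

definition wf_game :: "('n::finite, 's) nfgame \<Rightarrow> bool" where
  "wf_game G \<longleftrightarrow> (\<forall>i. finite (strats G i) \<and> strats G i \<noteq> {})"

definition mixed_strategy :: "('n, 's) nfgame \<Rightarrow> 'n \<Rightarrow> ('s \<Rightarrow> real) \<Rightarrow> bool" where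
  "mixed_strategy G i s \<longleftrightarrow>
     (\<forall>x. s x \<ge> 0) \<and> (\<forall>x. x \<notin> strats G i \<longrightarrow> s x = 0) \<and> sum s (strats G i) = 1"

definition mixed_profile :: "('n, 's) nfgame \<Rightarrow> ('n \<Rightarrow> 's \<Rightarrow> real) \<Rightarrow> bool" where
  "mixed_profile G \<sigma> \<longleftrightarrow> (\<forall>i. mixed_strategy G i (\<sigma> i))"

definition exp_payoff :: "('n::finite, 's) nfgame \<Rightarrow> 'n \<Rightarrow> ('n \<Rightarrow> 's \<Rightarrow> real) \<Rightarrow> real" where
  "exp_payoff G j \<sigma> = (\<Sum>v\<in>positions G. (\<Prod>k\<in>UNIV. \<sigma> k (v k)) * payoff G j v)"

definition nash_eq :: "('n::finite, 's) nfgame \<Rightarrow> ('n \<Rightarrow> 's \<Rightarrow> real) \<Rightarrow> bool" where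
  "nash_eq G \<sigma> \<longleftrightarrow> mixed_profile G \<sigma> \<and>
     (\<forall>j \<tau>. mixed_strategy G j \<tau> \<longrightarrow> exp_payoff G j (\<sigma>(j := \<tau>)) \<le> exp_payoff G j \<sigma>)"

record ('n, 's) mgame =
  actual :: "('n, 's) nfgame"
  subj :: "'n \<Rightarrow> ('n, 's) nfgame"

text \<open>Canonical: every subjective game has the same players (the type 'n) and the same
  strategy sets as the actual game, differing only in payoffs.\<close>
definition canonical :: "('n::finite, 's) mgame \<Rightarrow> bool" where
  "canonical mG \<longleftrightarrow> wf_game (actual mG) \<and> (\<forall>i. strats (subj mG i) = strats (actual mG))"

definition NME :: "('n::finite, 's) mgame \<Rightarrow> ('n \<Rightarrow> 's \<Rightarrow> real) set" where
  "NME mG = {\<sigma>. \<forall>i. \<exists>\<tau>. nash_eq (subj mG i) \<tau> \<and> \<sigma> i = \<tau> i}"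

definition supp :: "('s \<Rightarrow> real) \<Rightarrow> 's set" where
  "supp s = {x. s x \<noteq> 0}"

definition chi :: "('n \<Rightarrow> 's \<Rightarrow> real) \<Rightarrow> ('n \<Rightarrow> 's) set" where
  "chi \<sigma> = {v. \<forall>i. v i \<in> supp (\<sigma> i)}"

definition adapt :: "('n, 's) mgame \<Rightarrow> ('n \<Rightarrow> 's) \<Rightarrow> ('n, 's) mgame" where
  "adapt mG v = mG\<lparr>subj := (\<lambda>i. (subj mG i)\<lparr>payoff :=
      (\<lambda>j. (payoff (subj mG i) j)(v := payoff (actual mG) j v))\<rparr>)\<rparr>"

definition AD :: "('n::finite, 's) mgame set \<Rightarrow> ('n, 's) mgame set" where
  "AD M = {adapt mG u | mG \<sigma> u. mG \<in> M \<and> \<sigma> \<in> NME mG \<and> u \<in> chi \<sigma>}"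

end

theory Submission
  imports Defs
begin

definition Dset :: "('n, 's) mgame \<Rightarrow> ('n \<times> 'n \<times> ('n \<Rightarrow> 's)) set" where
  "Dset mG = {(i,j,v). payoff (subj mG i) j v \<noteq> payoff (actual mG) j v}"

lemma Dset_adapt: "Dset (adapt mG u) = Dset mG - {(i,j,v). v = u}"
  unfolding Dset_def adapt_def by auto

lemma adapt_id:
  assumes "\<forall>i j. payoff (subj mG i) j u = payoff (actual mG) j u"
  shows "adapt mG u = mG"
proof -
  have "(\<lambda>i. (subj mG i)\<lparr>payoff := (\<lambda>j. (payoff (subj mG i) j)(u := payoff (actual mG) j u))\<rparr>) = subj mG"
  proof
    fix i
    have "(\<lambda>j. (payoff (subj mG i) j)(u := payoff (actual mG) j u)) = payoff (subj mG i)"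
      using assms by (intro ext) (simp add: fun_upd_idem)
    then show "(subj mG i)\<lparr>payoff := (\<lambda>j. (payoff (subj mG i) j)(u := payoff (actual mG) j u))\<rparr> = subj mG i"
      by simp
  qed
  then show ?thesis unfolding adapt_def by simp
qed

lemma AD_single: "x \<in> AD {m} \<Longrightarrow> \<exists>u. x = adapt m u"
  unfolding AD_def by auto

lemma adapt_eq:
  assumes "Dset (adapt m u) = Dset m" shows "adapt m u = m"
proof (rule adapt_id, intro allI)
  fix i j
  have "(i,j,u) \<notin> Dset (adapt m u)" by (simp add: Dset_adapt)
  then have "(i,j,u) \<notin> Dset m" using assms by simp
  then show "payoff (subj m i) j u = payoff (actual m) j u" unfolding Dset_def by auto
qed

theorem proposition9:
  fixes mG :: "nat \<Rightarrow> ('n::finite, 's) mgame" and n :: nat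
  assumes "n \<ge> 1"
    and "\<forall>i\<in>{1..n}. canonical (mG i)"
    and "\<forall>i\<in>{1..<n}. mG (Suc i) \<in> AD {mG i}"
    and "mG 1 \<in> AD {mG n}"
  shows "\<forall>i\<in>{1..n}. \<forall>j\<in>{1..n}. mG i = mG j"
proof -
  have step: "\<exists>u. mG (Suc k) = adapt (mG k) u" if "1 \<le> k" "k < n" for k
  proof -
    have "k \<in> {1..<n}" using that by simp
    then have "mG (Suc k) \<in> AD {mG k}" using assms(3) by blast
    then show ?thesis by (rule AD_single)
  qed
  have sub: "Dset (mG (Suc k)) \<subseteq> Dset (mG k)" if hk: "1 \<le> k" "k < n" for k
  proof -
    obtain u where "mG (Suc k) = adapt (mG k) u" using step[OF hk] by blast
    then show ?thesis using Dset_adapt[of "mG k" u] by simp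
  qed
  have chain: "Dset (mG k) \<subseteq> Dset (mG 1)" if "1 \<le> k" "k \<le> n" for k
    using that
  proof (induction k)
    case 0 then show ?case by simp
  next
    case (Suc k)
    show ?case
    proof (cases "k = 0")
      case True then show ?thesis by simp
    next
      case False
      then show ?thesis using Suc sub[of k] by auto
    qed
  qed
  obtain u where u: "mG 1 = adapt (mG n) u" using AD_single assms(4) by blast
  have "Dset (mG 1) \<subseteq> Dset (mG n)" using u Dset_adapt by auto
  have chain2: "Dset (mG 1) \<subseteq> Dset (mG k)" if "1 \<le> k" "k \<le> n" for k
    using that
  proof (induction "n - k" arbitrary: k)
    case 0 then have "k = n" by simp
    then show ?case using \<open>Dset (mG 1) \<subseteq> Dset (mG n)\<close> by simp
  next
    case (Suc d)
    then have hd: "d = n - Suc k" "k < n" by arith+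
    have h1: "Dset (mG 1) \<subseteq> Dset (mG (Suc k))" using Suc.hyps(1)[of "Suc k"] hd by linarith
    have h2: "Dset (mG (Suc k)) \<subseteq> Dset (mG k)" using sub[of k] Suc.prems(1) hd(2) by blast
    show ?case using h1 h2 by blast
  qed
  have eqD: "Dset (mG k) = Dset (mG 1)" if "1 \<le> k" "k \<le> n" for k
    using chain chain2 that by blast
  have eqs: "mG k = mG 1" if "1 \<le> k" "k \<le> n" for k
    using that
  proof (induction k)
    case 0 then show ?case by simp
  next
    case (Suc k)
    show ?case
    proof (cases "k = 0")
      case True then show ?thesis by simp
    next
      case False
      then have k: "1 \<le> k" "k < n" using Suc by auto
      obtain w where w: "mG (Suc k) = adapt (mG k) w" using step[OF k] by blast
      have "Dset (adapt (mG k) w) = Dset (mG k)" using w eqD[of k] eqD[of "Suc k"] k by simp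
      then have "mG (Suc k) = mG k" using w adapt_eq by metis
      then show ?thesis using Suc k by simp
    qed
  qed
  show ?thesis
  proof (intro ballI)
    fix i j assume "i \<in> {1..n}" "j \<in> {1..n}"
    then have "mG i = mG 1" "mG j = mG 1" using eqs[of i] eqs[of j] by auto
    then show "mG i = mG j" by (rule trans[OF _ sym])
  qed
qed

end
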